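(* Let $\mathcal{W}$ be a finite set and $\mathcal{E}$ a closed convex subset of $\mathcal{P}_{\mathcal{W}}$. Let $\mathcal{X}$ and $\mathcal{Y}$ be finite sets with functions $f_{\mathcal{X}}:\mathcal{W}\to\mathcal{X}$ and $f_{\mathcal{Y}}:\mathcal{W}\to\mathcal{Y}$. For $y^N\in\mathcal{Y}^N$ define $$T(y^N):=\{x^N\in\mathcal{X}^N:\ \exists P\in\mathcal{E},\ P_{\mathcal{X}\times\mathcal{Y}}=\tilde P_{x^N,y^N}\}.$$ Then $$|T(y^N)|\le\max_{P\in\mathcal{E}:\ P_{\mathcal{Y}}=\tilde P_{y^N}}2^{N H(X|Y)_{P_{\mathcal{X}\times\mathcal{Y}}}}.$$
   Context: $\mathcal{P}_\Omega$ denotes the set of probability mass functions on a finite set $\Omega$. For $P\in\mathcal{P}_{\mathcal{W}}$, $P_{\mathcal{X}\times\mathcal{Y}}$ and $P_{\mathcal{Y}}$ are the distributions induced by $w\mapsto(f_{\mathcal{X}}(w),f_{\mathcal{Y}}(w))$ and $w\mapsto f_{\mathcal{Y}}(w)$, i.e. $P_\Gamma(g)=\sum_{w:f_\Gamma(w)=g}P(w)$. For sequences, $\tilde P_{y^N}(y)=\frac1N|\{i:y_i=y\}|$ and $\tilde P_{x^N,y^N}(x,y)=\frac1N|\{i:(x_i,y_i)=(x,y)\}|$ are types. $H(X|Y)_{P_{\mathcal{X}\times\mathcal{Y}}}$ is the conditional Shannon entropy (base 2) of $X$ given $Y$ under the joint distribution $P_{\mathcal{X}\times\mathcal{Y}}$.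 *)

theory Defs
  imports "HOL-Analysis.Analysis"
begin

definition pmfs :: "('w::finite \<Rightarrow> real) set" where
  "pmfs = {P. (\<forall>w. 0 \<le> P w) \<and> (\<Sum>w\<in>UNIV. P w) = 1}"

definition convex_fun_set :: "('w \<Rightarrow> real) set \<Rightarrow> bool" where
  "convex_fun_set E \<longleftrightarrow>
     (\<forall>P\<in>E. \<forall>Q\<in>E. \<forall>t::real. 0 \<le> t \<and> t \<le> 1 \<longrightarrow> (\<lambda>w. t * P w + (1 - t) * Q w) \<in> E)"

definition marg_XY :: "('w::finite \<Rightarrow> 'x) \<Rightarrow> ('w \<Rightarrow> 'y) \<Rightarrow> ('w \<Rightarrow> real) \<Rightarrow> ('x \<times> 'y \<Rightarrow> real)" where
  "marg_XY fX fY P = (\<lambda>(x, y). \<Sum>w\<in>{w. fX w = x \<and> fY w = y}. P w)"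

definition marg_Y :: "('w::finite \<Rightarrow> 'y) \<Rightarrow> ('w \<Rightarrow> real) \<Rightarrow> ('y \<Rightarrow> real)" where
  "marg_Y fY P = (\<lambda>y. \<Sum>w\<in>{w. fY w = y}. P w)"

definition type1 :: "'y list \<Rightarrow> ('y \<Rightarrow> real)" where
  "type1 ys = (\<lambda>y. real (card {i. i < length ys \<and> ys ! i = y}) / real (length ys))"

definition type2 :: "'x list \<Rightarrow> 'y list \<Rightarrow> ('x \<times> 'y \<Rightarrow> real)" where
  "type2 xs ys = (\<lambda>(x, y). real (card {i. i < length ys \<and> xs ! i = x \<and> ys ! i = y}) / real (length ys))"

definition cond_entropy :: "('x::finite \<times> 'y::finite \<Rightarrow> real) \<Rightarrow> real" where
  "cond_entropy Q = - (\<Sum>(x, y)\<in>UNIV.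
      if Q (x, y) = 0 then 0
      else Q (x, y) * log 2 (Q (x, y) / (\<Sum>x'\<in>UNIV. Q (x', y))))"

definition Tset :: "('w::finite \<Rightarrow> real) set \<Rightarrow> ('w \<Rightarrow> 'x::finite) \<Rightarrow> ('w \<Rightarrow> 'y) \<Rightarrow> 'y list \<Rightarrow> 'x list set" where
  "Tset E fX fY ys = {xs. length xs = length ys \<and> (\<exists>P\<in>E. marg_XY fX fY P = type2 xs ys)}"

end

theory Submission
  imports Defs "HOL-Real_Asymp.Real_Asymp"
begin


lemma sum_lists_prod:
  fixes f :: "'x::finite \<Rightarrow> 'y \<Rightarrow> real"
  shows "(\<Sum>xs\<in>{xs. length xs = length ys}. \<Prod>i<length ys. f (xs!i) (ys!i))
        = (\<Prod>i<length ys. \<Sum>x\<in>UNIV. f x (ys!i))"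
proof (induction ys)
  case Nil
  then show ?case by simp
next
  case (Cons y ys)
  have eq: "{xs. length xs = length (y#ys)} = (\<lambda>(x,xs). x#xs) ` (UNIV \<times> {xs. length xs = length ys})"
    by (auto simp: length_Suc_conv image_iff)
  have inj: "inj_on (\<lambda>(x,xs). x#xs) (UNIV \<times> {xs. length xs = length ys})"
    by (auto simp: inj_on_def)
  have fin: "finite {xs::'x list. length xs = length ys}"
    using finite_lists_length_eq[of "UNIV::'x set"] by simp
  have "(\<Sum>xs\<in>{xs. length xs = length (y#ys)}. \<Prod>i<length (y#ys). f (xs!i) ((y#ys)!i))
      = (\<Sum>(x,xs)\<in>UNIV \<times> {xs. length xs = length ys}. \<Prod>i<Suc (length ys). f ((x#xs)!i) ((y#ys)!i))"
    unfolding eq by (subst sum.reindex[OF inj]) (simp add: case_prod_unfold)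
  also have "\<dots> = (\<Sum>(x,xs)\<in>UNIV \<times> {xs. length xs = length ys}. f x y * (\<Prod>i<length ys. f (xs!i) (ys!i)))"
    by (simp del: prod.lessThan_Suc add: prod.lessThan_Suc_shift)
  also have "\<dots> = (\<Sum>x\<in>UNIV. \<Sum>xs\<in>{xs. length xs = length ys}. f x y * (\<Prod>i<length ys. f (xs!i) (ys!i)))"
    by (rule sum.cartesian_product[symmetric])
  also have "\<dots> = (\<Sum>x\<in>UNIV. f x y) * (\<Sum>xs\<in>{xs. length xs = length ys}. (\<Prod>i<length ys. f (xs!i) (ys!i)))"
    by (rule sum_product[symmetric])
  also have "\<dots> = (\<Prod>i<length (y#ys). \<Sum>x\<in>UNIV. f x ((y#ys)!i))"
    using Cons by (simp del: prod.lessThan_Suc add: prod.lessThan_Suc_shift)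
  finally show ?case .
qed

lemma finite_len: "finite {xs::'x::finite list. length xs = n}"
  using finite_lists_length_eq[of "UNIV::'x set"] by simp

lemma sum_group_card:
  fixes g :: "nat \<Rightarrow> 'a::finite" and h :: "'a \<Rightarrow> real"
  shows "(\<Sum>i<N. h (g i)) = (\<Sum>a\<in>UNIV. real (card {i. i < N \<and> g i = a}) * h a)"
proof -
  have "(\<Sum>i<N. h (g i)) = (\<Sum>a\<in>UNIV. \<Sum>i\<in>{i. i \<in> {..<N} \<and> g i = a}. h (g i))"
    by (rule sum.group[symmetric]) auto
  also have "\<dots> = (\<Sum>a\<in>UNIV. \<Sum>i\<in>{i. i \<in> {..<N} \<and> g i = a}. h a)"
    by (intro sum.cong) auto
  also have "\<dots> = (\<Sum>a\<in>UNIV. real (card {i. i < N \<and> g i = a}) * h a)"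
    by simp
  finally show ?thesis .
qed

lemma exp_tangent2:
  "2 powr (a::real) \<ge> 2 powr m * (1 + (a - m) * ln 2)"
proof -
  have "2 powr a = 2 powr m * exp ((a - m) * ln 2)"
    by (simp add: powr_def exp_add[symmetric] algebra_simps)
  moreover have "exp ((a - m) * ln 2) \<ge> 1 + (a - m) * ln 2" by (rule exp_ge_add_one_self)
  ultimately show ?thesis by (simp add: mult_left_mono)
qed



lemma count_bound:
  fixes T :: "'x::finite list set" and ys :: "'y::finite list"
  assumes Tsub: "T \<subseteq> {xs. length xs = length ys}" and Tne: "T \<noteq> {}" and Npos: "length ys > 0"
  defines "V \<equiv> \<lambda>xy. (\<Sum>xs\<in>T. type2 xs ys xy) / real (card T)"
  shows "real (card T) \<le> 2 powr (real (length ys) * cond_entropy V)"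
proof -
  define N where "N = length ys"
  define n where "n = card T"
  have finT: "finite T" using Tsub finite_len finite_subset by blast
  have npos: "n > 0" unfolding n_def using finT Tne by (simp add: card_gt_0_iff)
  have Np: "N > 0" using Npos N_def by simp
  define c where "c = (\<lambda>(xs::'x list) (xy::'x \<times> 'y). real (card {i. i < N \<and> (xs!i, ys!i) = xy}))"
  have t2: "type2 xs ys xy = c xs xy / N" for xs xy
    by (cases xy) (simp add: type2_def c_def N_def)
  define p where "p = (\<lambda>y. \<Sum>x\<in>UNIV. V (x, y))"
  define W where "W = (\<lambda>xy. V xy / p (snd xy))"
  define L where "L = (\<lambda>xy. if V xy = 0 then 0 else log 2 (W xy))"
  define a where "a = (\<lambda>xs. \<Sum>i<N. L (xs!i, ys!i))"
  have Vnn: "V xy \<ge> 0" for xy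
    unfolding V_def by (intro divide_nonneg_nonneg sum_nonneg) (simp_all add: type2_def case_prod_unfold)
  have A: "a xs = (\<Sum>xy\<in>UNIV. c xs xy * L xy)" for xs
    unfolding a_def c_def by (rule sum_group_card[of "\<lambda>xy. L xy" "\<lambda>i. (xs!i, ys!i)"])
  have B: "(\<Sum>xs\<in>T. a xs) = n * N * (\<Sum>xy\<in>UNIV. V xy * L xy)"
  proof -
    have "(\<Sum>xs\<in>T. a xs) = (\<Sum>xy\<in>UNIV. (\<Sum>xs\<in>T. c xs xy) * L xy)"
      unfolding A by (subst sum.swap) (simp add: sum_distrib_right)
    also have "\<dots> = (\<Sum>xy\<in>UNIV. (n * N * V xy) * L xy)"
    proof (intro sum.cong refl)
      fix xy
      have "(\<Sum>xs\<in>T. c xs xy) = N * (\<Sum>xs\<in>T. type2 xs ys xy)"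
        using Np by (simp add: t2 sum_distrib_left)
      also have "\<dots> = n * N * V xy" using npos by (simp add: V_def n_def)
      finally show "(\<Sum>xs\<in>T. c xs xy) * L xy = (n * N * V xy) * L xy" by simp
    qed
    also have "\<dots> = n * N * (\<Sum>xy\<in>UNIV. V xy * L xy)"
      by (simp add: sum_distrib_left mult.assoc)
    finally show ?thesis .
  qed
  have C: "cond_entropy V = - (\<Sum>xy\<in>UNIV. V xy * L xy)"
  proof -
    have "\<And>xy. V xy * L xy = (case xy of (x, y) \<Rightarrow> if V (x, y) = 0 then 0
          else V (x, y) * log 2 (V (x, y) / (\<Sum>x'\<in>UNIV. V (x', y))))"
      unfolding L_def W_def p_def by (auto split: prod.splits)
    thus ?thesis unfolding cond_entropy_def by simp
  qed
  define m where "m = (\<Sum>xs\<in>T. a xs) / n"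
  have m: "m = - (N * cond_entropy V)"
    using npos by (simp add: m_def B C)
  have D: "2 powr a xs = (\<Prod>i<N. W (xs!i, ys!i))" if xs: "xs \<in> T" for xs
  proof -
    have "2 powr a xs = (\<Prod>i<N. 2 powr L (xs!i, ys!i))"
      unfolding a_def by (simp add: powr_sum)
    also have "\<dots> = (\<Prod>i<N. W (xs!i, ys!i))"
    proof (intro prod.cong refl)
      fix i assume i: "i \<in> {..<N}"
      let ?xy = "(xs!i, ys!i)"
      have "c xs ?xy \<ge> 1"
      proof -
        have "i \<in> {i. i < N \<and> (xs!i, ys!i) = ?xy}" using i by simp
        hence "card {i. i < N \<and> (xs!i, ys!i) = ?xy} > 0"
          by (subst card_gt_0_iff) auto
        thus ?thesis unfolding c_def by linarith
      qed
      hence tpos: "type2 xs ys ?xy > 0" using Np by (simp add: t2)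
      have "type2 xs ys ?xy \<le> (\<Sum>xs\<in>T. type2 xs ys ?xy)"
        by (rule member_le_sum[OF xs _ finT]) (simp add: type2_def)
      hence Vpos: "V ?xy > 0" using tpos npos unfolding V_def n_def by (simp add: divide_pos_pos)
      have "V ?xy \<le> p (ys!i)" unfolding p_def
        by (rule member_le_sum[of "xs!i" UNIV "\<lambda>x. V (x, ys!i)", simplified]) (simp add: Vnn)
      hence Wpos: "W ?xy > 0" using Vpos by (simp add: W_def)
      show "2 powr L ?xy = W ?xy" using Vpos Wpos by (simp add: L_def)
    qed
    finally show ?thesis .
  qed
  have E: "(\<Sum>xs\<in>T. 2 powr a xs) \<le> 1"
  proof -
    have Wnn: "W xy \<ge> 0" for xy unfolding W_def p_def
      by (intro divide_nonneg_nonneg sum_nonneg Vnn)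
    have "(\<Sum>xs\<in>T. 2 powr a xs) = (\<Sum>xs\<in>T. \<Prod>i<N. W (xs!i, ys!i))"
      by (intro sum.cong refl D)
    also have "\<dots> \<le> (\<Sum>xs\<in>{xs. length xs = length ys}. \<Prod>i<N. W (xs!i, ys!i))"
      by (rule sum_mono2[OF finite_len Tsub]) (simp add: prod_nonneg Wnn)
    also have "\<dots> = (\<Prod>i<N. \<Sum>x\<in>UNIV. W (x, ys!i))"
      unfolding N_def by (rule sum_lists_prod[of "\<lambda>x y. W (x, y)"])
    also have "\<dots> \<le> 1"
    proof (rule prod_le_1)
      fix i
      have "(\<Sum>x\<in>UNIV. W (x, ys!i)) = p (ys!i) / p (ys!i)"
        unfolding W_def by (simp add: sum_divide_distrib[symmetric] p_def)
      thus "0 \<le> (\<Sum>x\<in>UNIV. W (x, ys!i)) \<and> (\<Sum>x\<in>UNIV. W (x, ys!i)) \<le> 1"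
        by (simp add: sum_nonneg Wnn)
    qed
    finally show ?thesis .
  qed
  have F: "n * 2 powr m \<le> (\<Sum>xs\<in>T. 2 powr a xs)"
  proof -
    have h: "(\<Sum>xs\<in>T. 2 powr m * (a xs * ln 2)) = 2 powr m * (sum a T * ln 2)"
      by (simp only: sum_distrib_left[symmetric] sum_distrib_right[symmetric])
    have "(\<Sum>xs\<in>T. 2 powr m * (1 + (a xs - m) * ln 2)) \<le> (\<Sum>xs\<in>T. 2 powr a xs)"
      by (intro sum_mono exp_tangent2)
    moreover have "(\<Sum>xs\<in>T. 2 powr m * (1 + (a xs - m) * ln 2))
        = 2 powr m * (n + ((\<Sum>xs\<in>T. a xs) - n * m) * ln 2)"
      by (simp add: sum_distrib_left sum.distrib sum_subtractf n_def ring_distribs h)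
    moreover have "(\<Sum>xs\<in>T. a xs) - n * m = 0" using npos by (simp add: m_def)
    ultimately show ?thesis by (simp add: mult.commute)
  qed
  have "n * 2 powr m \<le> 1" using E F by linarith
  hence "n \<le> 1 / 2 powr m" by (simp add: field_simps)
  also have "1 / 2 powr m = 2 powr (N * cond_entropy V)"
    by (simp add: m powr_minus divide_inverse)
  finally show ?thesis by (simp add: n_def N_def)
qed



definition hx :: "real \<Rightarrow> real" where "hx q = (if q = 0 then 0 else q * ln q)"

lemma xlnx_lim: "((\<lambda>q::real. q * ln q) \<longlongrightarrow> 0) (at_right 0)"
  by real_asymp

lemma hx_cont: "continuous_on {0..} hx"
  unfolding continuous_on_def
proof (intro ballI)
  fix x :: real assume x: "x \<in> {0..}"
  show "(hx \<longlongrightarrow> hx x) (at x within {0..})"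
  proof (cases "x = 0")
    case True
    have ev: "eventually (\<lambda>q. q * ln q = hx q) (at_right (0::real))"
      using eventually_at_right_less[of "0::real"] by eventually_elim (auto simp: hx_def)
    have "(hx \<longlongrightarrow> 0) (at_right 0)"
      by (rule Lim_transform_eventually[OF xlnx_lim ev])
    thus ?thesis using True by (simp add: at_within_Ici_at_right hx_def)
  next
    case False
    hence xp: "x > 0" using x by simp
    have ic: "isCont (\<lambda>q. q * ln q) x" using xp by (intro continuous_intros) auto
    have "((\<lambda>q. q * ln q) \<longlongrightarrow> x * ln x) (at x within {0..})"
      using continuous_at_imp_continuous_at_within[OF ic, of "{0..}"] by (simp add: continuous_within)
    hence "((\<lambda>q. q * ln q) \<longlongrightarrow> hx x) (at x within {0..})"
      using xp by (simp add: hx_def)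
    thus ?thesis
      by (rule Lim_transform_within_open[where s="{0<..}"]) (use xp in \<open>auto simp: hx_def\<close>)
  qed
qed

lemma g_eq: "q \<ge> 0 \<Longrightarrow> c \<ge> 0 \<Longrightarrow> (if q = 0 then 0 else q * log 2 (q / c))
   = (if c = 0 then 0 else hx q / ln 2 - q * log 2 c)"
  by (auto simp: hx_def log_def divide_simps ln_div right_diff_distrib)

lemma g_cont:
  assumes "(c::real) \<ge> 0"
  shows "continuous_on {0..} (\<lambda>q. if q = 0 then 0 else q * log 2 (q / c))"
proof -
  have "continuous_on {0..} (\<lambda>q. if c = 0 then 0 else hx q / ln 2 - q * log 2 c)"
  proof (cases "c = 0")
    case False
    thus ?thesis using hx_cont by (simp, intro continuous_intros) auto
  qed simp
  thus ?thesis
    by (rule continuous_on_cong[THEN iffD1, rotated 2]) (use assms g_eq in auto)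
qed


lemma avg_step:
  assumes "(n::real) > 0" shows "1/(n+1) * a + (1 - 1/(n+1)) * (s/n) = (a + s)/(n+1)"
proof -
  have n1: "n + 1 \<noteq> 0" using assms by simp
  have "1 - 1/(n+1) = n/(n+1)" using n1 by (simp add: field_simps)
  moreover have "n/(n+1) * (s/n) = s/(n+1)" using assms by simp
  ultimately show ?thesis by (simp add: add_divide_distrib)
qed


lemma marg_Y_sum:
  fixes fX :: "'w::finite \<Rightarrow> 'x::finite" and fY :: "'w \<Rightarrow> 'y"
  shows "marg_Y fY P y = (\<Sum>x\<in>UNIV. marg_XY fX fY P (x, y))"
proof -
  have "marg_Y fY P y = (\<Sum>x\<in>UNIV. \<Sum>w\<in>{w. w \<in> {w. fY w = y} \<and> fX w = x}. P w)"
    unfolding marg_Y_def by (rule sum.group[symmetric]) auto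
  also have "\<dots> = (\<Sum>x\<in>UNIV. marg_XY fX fY P (x, y))"
    unfolding marg_XY_def by (intro sum.cong refl) (auto intro: sum.cong)
  finally show ?thesis .
qed

lemma marg_Y_total:
  fixes fY :: "'w::finite \<Rightarrow> 'y::finite"
  shows "(\<Sum>y\<in>UNIV. marg_Y fY P y) = (\<Sum>w\<in>UNIV. P w)"
  unfolding marg_Y_def using sum.group[of UNIV UNIV fY P] by simp

lemma type1_sum:
  fixes xs :: "'x::finite list"
  assumes "length xs = length ys"
  shows "type1 ys y = (\<Sum>x\<in>UNIV. type2 xs ys (x, y))"
proof -
  have "real (card {i. i < length ys \<and> ys ! i = y})
     = (\<Sum>i\<in>{i. i < length ys \<and> ys ! i = y}. 1)" by simp
  also have "\<dots> = (\<Sum>x\<in>UNIV. \<Sum>i\<in>{i. i \<in> {i. i < length ys \<and> ys ! i = y} \<and> xs!i = x}. 1)"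
    by (rule sum.group[symmetric]) auto
  also have "\<dots> = (\<Sum>x\<in>UNIV. real (card {i. i < length ys \<and> xs ! i = x \<and> ys ! i = y}))"
    by (intro sum.cong refl) (simp, intro arg_cong[where f=card], auto)
  finally show ?thesis
    unfolding type1_def type2_def by (simp add: sum_divide_distrib[symmetric])
qed

lemma marg_type:
  fixes xs :: "'x::finite list"
  assumes "length xs = length ys" "marg_XY fX fY P = type2 xs ys"
  shows "marg_Y fY P = type1 ys"
  using assms by (auto simp: fun_eq_iff marg_Y_sum[where fX=fX] type1_sum[OF assms(1)])

lemma convex_avg:
  assumes cv: "convex_fun_set E" and fin: "finite A" and ne: "A \<noteq> {}"
    and mem: "\<And>a. a \<in> A \<Longrightarrow> Pf a \<in> E"
  shows "(\<lambda>w. (\<Sum>a\<in>A. Pf a w) / real (card A)) \<in> E"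
  using fin ne mem
proof (induction A rule: finite_ne_induct)
  case (singleton x)
  then show ?case by simp
next
  case (insert x F)
  define n where "n = card F"
  have np: "n > 0" unfolding n_def using insert by (simp add: card_gt_0_iff)
  define t where "t = 1 / (real n + 1)"
  have t01: "0 \<le> t" "t \<le> 1" by (auto simp: t_def)
  define Q where "Q = (\<lambda>w. (\<Sum>a\<in>F. Pf a w) / real (card F))"
  have Px: "Pf x \<in> E" using insert by simp
  have avgF: "Q \<in> E" unfolding Q_def
    by (rule insert.IH) (use insert.prems in auto)
  have "(\<lambda>w. t * Pf x w + (1 - t) * Q w) \<in> E"
    using cv Px avgF t01 unfolding convex_fun_set_def by blast
  hence "(\<lambda>w. t * Pf x w + (1 - t) * ((\<Sum>a\<in>F. Pf a w) / real (card F))) \<in> E"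
    by (simp add: Q_def)
  moreover have "(\<lambda>w. t * Pf x w + (1 - t) * ((\<Sum>a\<in>F. Pf a w) / real (card F)))
     = (\<lambda>w. (\<Sum>a\<in>insert x F. Pf a w) / real (card (insert x F)))"
  proof
    fix w
    have cF: "real (card (insert x F)) = real n + 1" using insert by (simp add: n_def)
    have "t * Pf x w + (1 - t) * ((\<Sum>a\<in>F. Pf a w) / real n)
        = (Pf x w + (\<Sum>a\<in>F. Pf a w)) / (real n + 1)"
      unfolding t_def using np by (intro avg_step) simp
    thus "t * Pf x w + (1 - t) * ((\<Sum>a\<in>F. Pf a w) / real (card F))
        = (\<Sum>a\<in>insert x F. Pf a w) / real (card (insert x F))"
      using insert cF by (simp add: n_def)
  qed
  ultimately show ?case by simp
qed

lemma marg_XY_avg: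
  "marg_XY fX fY (\<lambda>w. (\<Sum>a\<in>A. Pf a w) / c) = (\<lambda>xy. (\<Sum>a\<in>A. marg_XY fX fY (Pf a) xy) / c)"
  unfolding marg_XY_def
  by (auto simp: fun_eq_iff sum_divide_distrib[symmetric] intro: sum.swap)

lemma pmf_bound: "P \<in> pmfs \<Longrightarrow> P w \<in> {0..1}"
proof -
  assume P: "P \<in> pmfs"
  hence "P w \<le> (\<Sum>w\<in>UNIV. P w)" by (intro member_le_sum) (auto simp: pmfs_def)
  thus ?thesis using P by (auto simp: pmfs_def)
qed

lemma cont_coord [continuous_intros]: "continuous_on S (\<lambda>P::'a \<Rightarrow> real. P w)"
  by (rule continuous_on_subset[OF continuous_on_product_coordinates]) simp

lemma compact_box: "compact (Pi\<^sub>E (UNIV::'a set) (\<lambda>_. {0..1::real}))"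
proof -
  have "compactin (product_topology (\<lambda>_. euclidean) (UNIV::'a set)) (Pi\<^sub>E UNIV (\<lambda>_. {0..1::real}))"
    by (subst compactin_PiE) simp
  thus ?thesis by (simp add: euclidean_product_topology)
qed



theorem lemma1:
  fixes E :: "('w::finite \<Rightarrow> real) set"
    and fX :: "'w \<Rightarrow> 'x::finite" and fY :: "'w \<Rightarrow> 'y::finite"
    and ys :: "'y list" and N :: nat
  assumes "E \<subseteq> pmfs" and "closed E" and "convex_fun_set E"
    and "length ys = N"
  shows "(\<exists>P\<in>{P\<in>E. marg_Y fY P = type1 ys}.
            (\<forall>Q\<in>{P\<in>E. marg_Y fY P = type1 ys}.
               2 powr (real N * cond_entropy (marg_XY fX fY Q))
               \<le> 2 powr (real N * cond_entropy (marg_XY fX fY P)))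
          \<and> real (card (Tset E fX fY ys)) \<le> 2 powr (real N * cond_entropy (marg_XY fX fY P)))
         \<or> ({P\<in>E. marg_Y fY P = type1 ys} = {} \<and> Tset E fX fY ys = {})"
proof -
  note Epmf = assms(1) and Ecl = assms(2) and Ecv = assms(3) and lenN = assms(4)
  define S where "S = {P\<in>E. marg_Y fY P = type1 ys}"
  define F where "F = (\<lambda>P. cond_entropy (marg_XY fX fY P))"
  define T where "T = Tset E fX fY ys"
  have Tchar: "xs \<in> T \<longleftrightarrow> length xs = length ys \<and> (\<exists>P\<in>E. marg_XY fX fY P = type2 xs ys)" for xs
    unfolding T_def Tset_def by simp
  have TS: "\<exists>P\<in>S. marg_XY fX fY P = type2 xs ys" if "xs \<in> T" for xs
  proof -
    from that obtain P where P: "P \<in> E" "marg_XY fX fY P = type2 xs ys" and l: "length xs = length ys"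
      using Tchar by blast
    have "marg_Y fY P = type1 ys" by (rule marg_type[OF l P(2)])
    thus ?thesis using P unfolding S_def by blast
  qed
  show ?thesis
  proof (cases "S = {}")
    case True
    hence "T = {}" using TS by blast
    thus ?thesis using True unfolding S_def T_def by simp
  next
    case False
    then obtain P0 where P0: "P0 \<in> S" by blast
    have Npos: "N > 0"
    proof (rule ccontr)
      assume "\<not> N > 0"
      hence "ys = []" using lenN by simp
      hence "marg_Y fY P0 = (\<lambda>_. 0)" using P0 by (simp add: S_def type1_def fun_eq_iff)
      moreover have "(\<Sum>y\<in>UNIV. marg_Y fY P0 y) = 1"
        using P0 Epmf marg_Y_total[of fY P0] by (auto simp: S_def pmfs_def)
      ultimately show False by simp
    qed
    have Spmf: "P \<in> pmfs" if "P \<in> S" for P using that Epmf by (auto simp: S_def)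
    have compS: "compact S"
    proof -
      have closed2: "closed {P. \<forall>y. marg_Y fY P y = type1 ys y}"
        unfolding marg_Y_def
        by (intro closed_Collect_all closed_Collect_eq continuous_intros)
      have "S = Pi\<^sub>E UNIV (\<lambda>_. {0..1::real}) \<inter> (E \<inter> {P. \<forall>y. marg_Y fY P y = type1 ys y})"
      proof -
        have Eb: "P w \<in> {0..1}" if "P \<in> E" for P w using that Epmf pmf_bound by blast
        show ?thesis unfolding S_def
          by (auto simp: fun_eq_iff PiE_iff dest: Eb)
      qed
      moreover have "closed (E \<inter> {P. \<forall>y. marg_Y fY P y = type1 ys y})"
        using Ecl closed2 by (rule closed_Int)
      ultimately show ?thesis using compact_Int_closed[OF compact_box] by simp
    qed
    have contF: "continuous_on S F"
    proof -
      define G where "G = (\<lambda>xy P. (\<lambda>q. if q = 0 then 0 else q * log 2 (q / type1 ys (snd xy)))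
                          (marg_XY fX fY P xy))"
      have cc: "continuous_on S (\<lambda>P. - (\<Sum>xy\<in>UNIV. G xy P))"
      proof (intro continuous_on_minus continuous_on_sum)
        fix xy :: "'x \<times> 'y"
        have c1: "continuous_on S (\<lambda>P. marg_XY fX fY P xy)"
          unfolding marg_XY_def by (cases xy) (simp, intro continuous_intros)
        have c2: "continuous_on {0..} (\<lambda>q. if q = 0 then 0 else q * log 2 (q / type1 ys (snd xy)))"
          by (rule g_cont) (simp add: type1_def)
        have im: "(\<lambda>P. marg_XY fX fY P xy) ` S \<subseteq> {0..}"
          using Spmf by (cases xy) (auto simp: marg_XY_def pmfs_def intro!: sum_nonneg)
        show "continuous_on S (G xy)"
          unfolding G_def by (rule continuous_on_compose2[OF c2 c1 im])
      qed
      have ee: "- (\<Sum>xy\<in>UNIV. G xy P) = F P" if "P \<in> S" for P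
      proof -
        have h: "(\<Sum>x'\<in>UNIV. marg_XY fX fY P (x', y)) = type1 ys y" for y
          using that marg_Y_sum[of fY P y fX] by (simp add: S_def)
        show ?thesis unfolding F_def cond_entropy_def G_def
          by (intro arg_cong[where f=uminus] sum.cong refl) (auto simp: h split: prod.splits)[1]
      qed
      show ?thesis by (rule continuous_on_eq[OF cc ee])
    qed
    obtain Pst where Pst: "Pst \<in> S" and Pmax: "\<And>Q. Q \<in> S \<Longrightarrow> F Q \<le> F Pst"
      using continuous_attains_sup[OF compS False contF] by blast
    have mono2: "2 powr (real N * F Q) \<le> 2 powr (real N * F Pst)" if "Q \<in> S" for Q
      using Pmax[OF that] by (intro powr_mono mult_left_mono) auto
    have cardb: "real (card T) \<le> 2 powr (real N * F Pst)"
    proof (cases "T = {}")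
      case True thus ?thesis by simp
    next
      case Tne: False
      have Tsub: "T \<subseteq> {xs. length xs = length ys}" using Tchar by blast
      have finT: "finite T" using Tsub finite_len finite_subset by blast
      have npos: "card T > 0" using finT Tne by (simp add: card_gt_0_iff)
      have "\<forall>xs\<in>T. \<exists>P. P \<in> E \<and> marg_XY fX fY P = type2 xs ys" using Tchar by blast
      then obtain Pf where Pf: "\<And>xs. xs \<in> T \<Longrightarrow> Pf xs \<in> E \<and> marg_XY fX fY (Pf xs) = type2 xs ys"
        by metis
      define Pb where "Pb = (\<lambda>w. (\<Sum>xs\<in>T. Pf xs w) / real (card T))"
      define V where "V = (\<lambda>xy. (\<Sum>xs\<in>T. type2 xs ys xy) / real (card T))"
      have PbE: "Pb \<in> E" unfolding Pb_def
        by (rule convex_avg[OF Ecv finT Tne]) (use Pf in blast)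
      have PbV: "marg_XY fX fY Pb = V"
        unfolding Pb_def V_def marg_XY_avg using Pf by (auto intro!: sum.cong)
      have PbY: "marg_Y fY Pb = type1 ys"
      proof
        fix y
        have "marg_Y fY Pb y = (\<Sum>x\<in>UNIV. V (x, y))"
          using marg_Y_sum[of fY Pb y fX] PbV by simp
        also have "\<dots> = (\<Sum>xs\<in>T. \<Sum>x\<in>UNIV. type2 xs ys (x, y)) / real (card T)"
          unfolding V_def by (simp add: sum_divide_distrib[symmetric] sum.swap[of _ UNIV])
        also have "\<dots> = (\<Sum>xs\<in>T. type1 ys y) / real (card T)"
          using Tsub by (intro arg_cong[where f="\<lambda>z. z / real (card T)"] sum.cong refl)
            (use Tsub in \<open>auto intro!: type1_sum[symmetric]\<close>)
        also have "\<dots> = type1 ys y" using npos by simp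
        finally show "marg_Y fY Pb y = type1 ys y" .
      qed
      have PbS: "Pb \<in> S" using PbE PbY by (simp add: S_def)
      have "real (card T) \<le> 2 powr (real (length ys) * cond_entropy V)"
        unfolding V_def by (rule count_bound[OF Tsub Tne]) (use Npos lenN in simp)
      also have "\<dots> = 2 powr (real N * F Pb)" using PbV lenN by (simp add: F_def)
      also have "\<dots> \<le> 2 powr (real N * F Pst)" by (rule mono2[OF PbS])
      finally show ?thesis .
    qed
    have "\<exists>P\<in>S. (\<forall>Q\<in>S. 2 powr (real N * F Q) \<le> 2 powr (real N * F P))
             \<and> real (card T) \<le> 2 powr (real N * F P)"
      using Pst mono2 cardb by blast
    thus ?thesis unfolding S_def F_def T_def by blast
  qed
qed

end
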